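(* There exists an absolute constant $\xi>0$ such that for every $\rho<\xi$: if $T$ is an $\alpha$-approximate integral solution of the MMDA instance $G^{(\rho)}_{n,\ell}$, then $\alpha\ge n^{\Omega(1/\ell)}$.
   Context: MMDA: an $\alpha$-approximate integral solution of a layered instance with source $s$, sinks $L_\ell$ and required out-degrees $k_u$ is $T\subseteq E$ with $|\delta_T^+(s)|\ge k_s/\alpha$, every vertex of in-degree at most $1$ in $T$, and $|\delta^+_T(v)|\ge k_v/\alpha$ for every non-sink $v\ne s$ of in-degree $1$ in $T$. The instance $G^{(\rho)}_{n,\ell}$: integers $m$ and $1/\epsilon$ with $\epsilon\rho m\in\mathbb N$, $\ell=3/\epsilon$, $\epsilon m=\omega(\log m)$ (when $\ell=3$, $\epsilon=1$); ground set $[m]$. Each vertex $v$ has a label $S_v\subseteq[m]$: $L_0=\{s\}$ with $S_s=\emptyset$; for $1\le i<2/\epsilon$, $L_i$ has one vertex per subset of size $i\epsilon\rho m$; for $2/\epsilon\le i\le3/\epsilon$, one vertex per subset of size $(4-i\epsilon)\rho m$. For $u\in L_{i-1},v\in L_i$, edge $(u,v)$ iff $S_u\subseteq S_v$ ($i\le 2/\epsilon$) or $S_v\subseteq S_u$ ($i>2/\epsilon$). Sinks: $L_{3/\epsilon}$. With $\delta_i^+$ the out-degree of vertices in $L_i$, $k_v=\gamma_i\delta^+_i$ for $v\in L_i$, $i<\ell$, where $\gamma_i=\gamma'_1$ ($0\le i<1/\epsilon$), $\gamma'_2$ ($1/\epsilon\le i<2/\epsilon$), $\gamma'_3$ ($2/\epsilon\le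 i<3/\epsilon$), $\gamma'_1=\frac{(\epsilon\rho m)!}{((\rho m)!\binom{(1-\rho)m}{\rho m})^{\epsilon}}$, $\gamma'_2=\frac{(\epsilon\rho m)!}{((\rho m)!\binom{2\rho m}{\rho m})^{\epsilon}}$, $\gamma'_3=\frac{(\epsilon\rho m)!}{((\rho m)!)^{\epsilon}}$. $n$ is the number of vertices, $n=2^{\Theta(m)}$. *)

theory Defs
  imports Complex_Main
begin

text \<open>Parameters: m (ground set [m] = {..<m}),
  e = 1/epsilon (a positive integer), q = epsilon*rho*m (a natural number).
  Then l = 3e, rho*m = e*q, and the label sizes are
  layer i < 2e: i*q  (= i*epsilon*rho*m), layer 2e <= i <= 3e: (4e - i)*q (= (4 - i*epsilon)*rho*m).\<close>

definition lsize :: "nat \<Rightarrow> nat \<Rightarrow> nat \<Rightarrow> nat" where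
  "lsize e q i = (if i < 2*e then i*q else (4*e - i)*q)"

definition gverts :: "nat \<Rightarrow> nat \<Rightarrow> nat \<Rightarrow> (nat \<times> nat set) set" where
  "gverts m e q = {(i, S). i \<le> 3*e \<and> S \<subseteq> {..<m} \<and> card S = lsize e q i}"

definition gedges :: "nat \<Rightarrow> nat \<Rightarrow> nat \<Rightarrow> ((nat \<times> nat set) \<times> (nat \<times> nat set)) set" where
  "gedges m e q = {((i, S), (j, S')). (i, S) \<in> gverts m e q \<and> (j, S') \<in> gverts m e q \<and>
      j = Suc i \<and> (if j \<le> 2*e then S \<subseteq> S' else S' \<subseteq> S)}"

definition gsource :: "nat \<times> nat set" where
  "gsource = (0, {})"

definition gnum :: "nat \<Rightarrow> nat \<Rightarrow> nat \<Rightarrow> nat" where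
  "gnum m e q = card (gverts m e q)"

text \<open>gamma'_1, gamma'_2, gamma'_3 with epsilon = 1/e, rho*m = e*q, (1-rho)*m = m - e*q.\<close>
definition gam1 :: "nat \<Rightarrow> nat \<Rightarrow> nat \<Rightarrow> real" where
  "gam1 m e q = fact q / ((fact (e*q) * real ((m - e*q) choose (e*q))) powr (1 / real e))"

definition gam2 :: "nat \<Rightarrow> nat \<Rightarrow> real" where
  "gam2 e q = fact q / ((fact (e*q) * real ((2*(e*q)) choose (e*q))) powr (1 / real e))"

definition gam3 :: "nat \<Rightarrow> nat \<Rightarrow> real" where
  "gam3 e q = fact q / ((fact (e*q)) powr (1 / real e))"

definition gamma_layer :: "nat \<Rightarrow> nat \<Rightarrow> nat \<Rightarrow> nat \<Rightarrow> real" where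
  "gamma_layer m e q i = (if i < e then gam1 m e q else if i < 2*e then gam2 e q else gam3 e q)"

definition outn :: "('v \<times> 'v) set \<Rightarrow> 'v \<Rightarrow> 'v set" where
  "outn F v = {w. (v, w) \<in> F}"

definition inn :: "('v \<times> 'v) set \<Rightarrow> 'v \<Rightarrow> 'v set" where
  "inn F v = {u. (u, v) \<in> F}"

text \<open>Required out-degree k_v = gamma_i * delta_i^+ for v in layer i < l (all vertices of a layer
  have the same out-degree delta_i^+ in G).\<close>
definition kreq :: "nat \<Rightarrow> nat \<Rightarrow> nat \<Rightarrow> nat \<times> nat set \<Rightarrow> real" where
  "kreq m e q v = gamma_layer m e q (fst v) * real (card (outn (gedges m e q) v))"

definition approx_sol :: "nat \<Rightarrow> nat \<Rightarrow> nat \<Rightarrow> real \<Rightarrow> ((nat \<times> nat set) \<times> (nat \<times> nat set)) set \<Rightarrow> bool" where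
  "approx_sol m e q \<alpha> T \<longleftrightarrow>
     T \<subseteq> gedges m e q \<and>
     real (card (outn T gsource)) \<ge> kreq m e q gsource / \<alpha> \<and>
     (\<forall>v \<in> gverts m e q. card (inn T v) \<le> 1) \<and>
     (\<forall>v \<in> gverts m e q. fst v \<noteq> 3*e \<and> v \<noteq> gsource \<and> card (inn T v) = 1 \<longrightarrow>
        real (card (outn T v)) \<ge> kreq m e q v / \<alpha>)"

end

theory Submission
  imports Defs "HOL-Real_Asymp.Real_Asymp"
begin

lemma pow_div_fact_le_exp:
  fixes x :: real assumes "0 \<le> x"
  shows "x ^ n / fact n \<le> exp x"
proof -
  have "(\<lambda>n. x^n /\<^sub>R fact n) sums exp x" by (rule exp_converges)
  hence s: "(\<lambda>n. x^n / fact n) sums exp x" by (simp add: divide_inverse_commute)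
  have "(\<Sum>i\<in>{n}. x^i / fact i) \<le> exp x"
    using sum_le_suminf[OF sums_summable[OF s], of "{n}"] s assms
    by (simp add: sums_iff)
  thus ?thesis by simp
qed

lemma binom_le_exp_bound:
  assumes "s > 0"
  shows "real (n choose s) \<le> (exp 1 * real n / real s) ^ s"
proof -
  have a: "real (n choose s) * fact s \<le> real n ^ s"
    using binomial_fact_pow[of n s] by (metis of_nat_fact of_nat_le_iff of_nat_mult of_nat_power)
  have b: "real s ^ s / fact s \<le> exp (real s)" by (rule pow_div_fact_le_exp) simp
  have fpos: "(0::real) < fact s" by simp
  have "real (n choose s) \<le> real n ^ s / fact s" using a fpos by (simp add: field_simps)
  also have "\<dots> = real n ^ s * (1 / fact s)" by simp
  also have "1 / fact s \<le> exp (real s) / real s ^ s" using b assms fpos by (simp add: field_simps)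
  hence "real n ^ s * (1 / fact s) \<le> real n ^ s * (exp (real s) / real s ^ s)"
    by (intro mult_left_mono) auto
  also have "exp (real s) = exp 1 ^ s" by (simp add: exp_of_nat_mult[symmetric])
  also have "real n ^ s * (exp 1 ^ s / real s ^ s) = (exp 1 * real n / real s) ^ s"
    by (simp add: power_mult_distrib power_divide)
  finally show ?thesis .
qed

lemma card_supersets:
  assumes "finite X" "U \<subseteq> X"
  shows "card {S. S \<subseteq> X \<and> U \<subseteq> S \<and> card S = card U + r} = (card X - card U) choose r"
proof -
  have fU: "finite U" using assms finite_subset by blast
  have "bij_betw (\<lambda>S. S - U) {S. S \<subseteq> X \<and> U \<subseteq> S \<and> card S = card U + r} {R. R \<subseteq> X - U \<and> card R = r}"
  proof (rule bij_betw_byWitness[where f' = "\<lambda>R. R \<union> U"])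
    show "\<forall>a\<in>{S. S \<subseteq> X \<and> U \<subseteq> S \<and> card S = card U + r}. a - U \<union> U = a" by blast
    show "\<forall>a\<in>{R. R \<subseteq> X - U \<and> card R = r}. a \<union> U - U = a" by blast
    show "(\<lambda>S. S - U) ` {S. S \<subseteq> X \<and> U \<subseteq> S \<and> card S = card U + r} \<subseteq> {R. R \<subseteq> X - U \<and> card R = r}"
    proof clarify
      fix S assume "S \<subseteq> X" "U \<subseteq> S" "card S = card U + r"
      moreover have "finite S" using \<open>S \<subseteq> X\<close> assms finite_subset by blast
      moreover have "finite U" using \<open>finite S\<close> \<open>U \<subseteq> S\<close> finite_subset by blast
      ultimately show "S - U \<subseteq> X - U \<and> card (S - U) = r" by (auto simp: card_Diff_subset)
    qed
    show "(\<lambda>R. R \<union> U) ` {R. R \<subseteq> X - U \<and> card R = r} \<subseteq> {S. S \<subseteq> X \<and> U \<subseteq> S \<and> card S = card U + r}"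
    proof clarify
      fix R assume "R \<subseteq> X - U" "r = card R"
      moreover have "finite R" using \<open>R \<subseteq> X - U\<close> assms finite_subset by blast
      ultimately show "R \<union> U \<subseteq> X \<and> U \<subseteq> R \<union> U \<and> card (R \<union> U) = card U + card R"
      proof -
        have "R \<inter> U = {}" using \<open>R \<subseteq> X - U\<close> by blast
        hence "card (R \<union> U) = card R + card U" using \<open>finite R\<close> fU by (simp add: card_Un_disjoint)
        thus ?thesis using \<open>R \<subseteq> X - U\<close> assms by auto
      qed
    qed
  qed
  hence "card {S. S \<subseteq> X \<and> U \<subseteq> S \<and> card S = card U + r} = card {R. R \<subseteq> X - U \<and> card R = r}"
    by (rule bij_betw_same_card)
  also have "\<dots> = card (X - U) choose r" using assms by (intro n_subsets) auto
  also have "card (X - U) = card X - card U" using assms fU by (simp add: card_Diff_subset)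
  finally show ?thesis .
qed

lemma prod_binom_telescope:
  assumes "e * q \<le> n"
  shows "(\<Prod>j<e. real ((n - j*q) choose q)) = fact n / (fact (n - e*q) * fact q ^ e)"
  using assms
proof (induction e)
  case 0 then show ?case by simp
next
  case (Suc e)
  have le: "e*q \<le> n" using Suc.prems by simp
  have le2: "q \<le> n - e*q" using Suc.prems by simp
  have "(\<Prod>j<Suc e. real ((n - j*q) choose q)) = fact n / (fact (n - e*q) * fact q ^ e) * real ((n - e*q) choose q)"
    using Suc.IH[OF le] by simp
  also have "real ((n - e*q) choose q) = fact (n - e*q) / (fact q * fact (n - e*q - q))"
    using le2 by (rule binomial_fact)
  also have "n - e*q - q = n - Suc e * q" by simp
  finally show ?case by (simp add: field_simps)
qed

definition deg :: "nat \<Rightarrow> nat \<Rightarrow> nat \<Rightarrow> nat \<Rightarrow> nat" where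
  "deg m e q i = (if i < 2*e then (m - i*q) choose q else ((4*e - i)*q) choose q)"

lemma gverts_sub: "gverts m e q \<subseteq> {..3*e} \<times> Pow {..<m}"
  unfolding gverts_def by auto

lemma finite_gverts: "finite (gverts m e q)"
  by (rule finite_subset[OF gverts_sub]) auto

lemma card_gverts_le: "card (gverts m e q) \<le> (3*e+1) * 2^m"
proof -
  have "card (gverts m e q) \<le> card ({..3*e} \<times> Pow {..<m})"
    by (rule card_mono[OF _ gverts_sub]) auto
  also have "\<dots> = (3*e+1) * 2^m" by (simp add: card_cartesian_product card_Pow)
  finally show ?thesis .
qed

lemma gedges_iff: "((i,S),(j,S')) \<in> gedges m e q \<longleftrightarrow> (i,S) \<in> gverts m e q \<and> (j,S') \<in> gverts m e q \<and> j = Suc i \<and> (if j \<le> 2*e then S \<subseteq> S' else S' \<subseteq> S)"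
  by (simp add: gedges_def)

lemma gverts_iff: "(i,S) \<in> gverts m e q \<longleftrightarrow> i \<le> 3*e \<and> S \<subseteq> {..<m} \<and> card S = lsize e q i"
  by (simp add: gverts_def)

lemma outn_iff: "w \<in> outn F v \<longleftrightarrow> (v,w) \<in> F" by (simp add: outn_def)

lemma outn_gedges_char:
  assumes v: "(i,S) \<in> gverts m e q" and i: "i < 3*e"
  shows "outn (gedges m e q) (i,S) = Pair (Suc i) ` {S'. S' \<subseteq> {..<m} \<and> card S' = lsize e q (Suc i) \<and> (if Suc i \<le> 2*e then S \<subseteq> S' else S' \<subseteq> S)}"
proof (intro set_eqI iffI)
  fix w assume "w \<in> outn (gedges m e q) (i,S)"
  moreover obtain j S' where w: "w = (j,S')" by (cases w)
  ultimately have "((i,S),(j,S')) \<in> gedges m e q" by (simp add: outn_iff)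
  hence "(j,S') \<in> gverts m e q" "j = Suc i" "if j \<le> 2*e then S \<subseteq> S' else S' \<subseteq> S"
    unfolding gedges_iff by blast+
  thus "w \<in> Pair (Suc i) ` {S'. S' \<subseteq> {..<m} \<and> card S' = lsize e q (Suc i) \<and> (if Suc i \<le> 2*e then S \<subseteq> S' else S' \<subseteq> S)}"
    unfolding gverts_iff w by blast
next
  fix w assume "w \<in> Pair (Suc i) ` {S'. S' \<subseteq> {..<m} \<and> card S' = lsize e q (Suc i) \<and> (if Suc i \<le> 2*e then S \<subseteq> S' else S' \<subseteq> S)}"
  then obtain S' where w: "w = (Suc i, S')" and h: "S' \<subseteq> {..<m}" "card S' = lsize e q (Suc i)" "if Suc i \<le> 2*e then S \<subseteq> S' else S' \<subseteq> S"
    by blast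
  have "(Suc i, S') \<in> gverts m e q" using h i unfolding gverts_iff by simp
  hence "((i,S),(Suc i,S')) \<in> gedges m e q" using v h(3) unfolding gedges_iff by blast
  thus "w \<in> outn (gedges m e q) (i,S)" using w by (simp add: outn_iff)
qed

lemma card_outn_gedges:
  assumes v: "(i,S) \<in> gverts m e q" and i: "i < 3*e"
  shows "card (outn (gedges m e q) (i,S)) = deg m e q i"
proof (cases "i < 2*e")
  case True
  have cS: "card S = i*q" and Sm: "S \<subseteq> {..<m}" using v True by (auto simp: gverts_iff lsize_def)
  have ls: "lsize e q (Suc i) = card S + q"
  proof (cases "Suc i < 2*e")
    case True then show ?thesis using cS by (simp add: lsize_def)
  next
    case False
    hence "Suc i = 2*e" using \<open>i < 2*e\<close> by simp
    hence "4*e - Suc i = Suc i" by simp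
    thus ?thesis using False cS by (simp add: lsize_def)
  qed
  have "{S'. S' \<subseteq> {..<m} \<and> card S' = lsize e q (Suc i) \<and> (if Suc i \<le> 2*e then S \<subseteq> S' else S' \<subseteq> S)}
      = {S'. S' \<subseteq> {..<m} \<and> S \<subseteq> S' \<and> card S' = card S + q}"
    using True ls by auto
  hence "card (outn (gedges m e q) (i,S)) = card {S'. S' \<subseteq> {..<m} \<and> S \<subseteq> S' \<and> card S' = card S + q}"
    using outn_gedges_char[OF v i] by (simp add: card_image inj_on_def)
  also have "\<dots> = (m - i*q) choose q" using card_supersets[OF _ Sm, of q] cS by simp
  finally show ?thesis using True by (simp add: deg_def)
next
  case False
  have cS: "card S = (4*e - i)*q" using v False by (auto simp: gverts_iff lsize_def)
  have ls: "lsize e q (Suc i) = card S - q"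
    using False cS i by (auto simp: lsize_def algebra_simps diff_mult_distrib Suc_diff_Suc)
  have Sm: "S \<subseteq> {..<m}" using v by (auto simp: gverts_iff)
  have "{S'. S' \<subseteq> {..<m} \<and> card S' = lsize e q (Suc i) \<and> (if Suc i \<le> 2*e then S \<subseteq> S' else S' \<subseteq> S)}
      = {S'. S' \<subseteq> S \<and> card S' = card S - q}"
    using False ls Sm by auto
  hence "card (outn (gedges m e q) (i,S)) = card {S'. S' \<subseteq> S \<and> card S' = card S - q}"
    using outn_gedges_char[OF v i] by (simp add: card_image inj_on_def)
  also have "\<dots> = card S choose (card S - q)"
    using Sm by (intro n_subsets) (auto intro: finite_subset)
  also have "\<dots> = card S choose q"
  proof -
    have "1 \<le> 4*e - i" using i by simp
    hence "1*q \<le> (4*e - i)*q" by (rule mult_right_mono) simp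
    hence "q \<le> card S" using cS by simp
    thus ?thesis by (rule binomial_symmetric[symmetric])
  qed
  finally show ?thesis using False cS by (simp add: deg_def)
qed

fun desc :: "('v \<times> 'v) set \<Rightarrow> nat \<Rightarrow> 'v \<Rightarrow> 'v set" where
  "desc T 0 v = {v}"
| "desc T (Suc j) v = (\<Union>u\<in>desc T j v. outn T u)"

lemma desc_add: "desc T (a + b) v = (\<Union>w\<in>desc T a v. desc T b w)"
  by (induction b) auto

definition xval :: "nat \<Rightarrow> nat \<Rightarrow> nat \<Rightarrow> real \<Rightarrow> nat \<Rightarrow> real" where
  "xval m e q \<alpha> i = gamma_layer m e q i * real (deg m e q i) / \<alpha>"

locale msol =
  fixes m e q :: nat and \<alpha> :: real and T :: "((nat \<times> nat set) \<times> (nat \<times> nat set)) set"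
  assumes e1: "1 \<le> e" and apos: "0 < \<alpha>" and sol: "approx_sol m e q \<alpha> T"
begin

definition act :: "nat \<times> nat set \<Rightarrow> bool" where
  "act v \<longleftrightarrow> v \<in> gverts m e q \<and> (v = gsource \<or> card (inn T v) = 1)"

lemma T_sub: "T \<subseteq> gedges m e q" using sol by (simp add: approx_sol_def)

lemma indeg: "v \<in> gverts m e q \<Longrightarrow> card (inn T v) \<le> 1" using sol by (simp add: approx_sol_def)

lemma edge_T: assumes "w \<in> outn T v"
  shows "v \<in> gverts m e q" "w \<in> gverts m e q" "fst w = Suc (fst v)"
    "fst w \<le> 2*e \<Longrightarrow> snd v \<subseteq> snd w" "\<not> fst w \<le> 2*e \<Longrightarrow> snd w \<subseteq> snd v"
proof -
  obtain i S j S' where v: "v = (i,S)" and w: "w = (j,S')" by (cases v, cases w)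
  have "((i,S),(j,S')) \<in> gedges m e q" using assms T_sub v w by (auto simp: outn_def)
  hence h: "(i,S) \<in> gverts m e q" "(j,S') \<in> gverts m e q" "j = Suc i"
      "j \<le> 2*e \<Longrightarrow> S \<subseteq> S'" "\<not> j \<le> 2*e \<Longrightarrow> S' \<subseteq> S"
    unfolding gedges_def by (auto split: if_splits)
  show "v \<in> gverts m e q" "w \<in> gverts m e q" "fst w = Suc (fst v)"
    "fst w \<le> 2*e \<Longrightarrow> snd v \<subseteq> snd w" "\<not> fst w \<le> 2*e \<Longrightarrow> snd w \<subseteq> snd v"
    using h v w by auto
qed

lemma finite_inn: "finite (inn T w)"
proof -
  have "inn T w \<subseteq> gverts m e q" using T_sub unfolding inn_def gedges_def by auto
  thus ?thesis using finite_gverts finite_subset by blast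
qed

lemma ch_disj: assumes "w \<in> outn T u" "w \<in> outn T u'" shows "u = u'"
proof -
  have "u \<in> inn T w" "u' \<in> inn T w" using assms by (auto simp: outn_def inn_def)
  moreover have "card (inn T w) \<le> Suc 0" using indeg edge_T(2)[OF assms(1)] by simp
  ultimately show ?thesis using finite_inn card_le_Suc0_iff_eq by blast
qed

lemma ch_act: assumes "w \<in> outn T v" shows "act w"
proof -
  have w: "w \<in> gverts m e q" by (rule edge_T(2)[OF assms])
  have "v \<in> inn T w" using assms by (auto simp: outn_def inn_def)
  hence "card (inn T w) \<noteq> 0" using finite_inn by auto
  with indeg[OF w] have "card (inn T w) = 1" by simp
  thus ?thesis using w by (simp add: act_def)
qed

lemma src_in: "gsource \<in> gverts m e q"
  using e1 by (simp add: gsource_def gverts_def lsize_def)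

lemma act_src: "act gsource" using src_in by (simp add: act_def)

lemma act_out: assumes "act v" "fst v < 3*e"
  shows "xval m e q \<alpha> (fst v) \<le> real (card (outn T v))"
proof -
  obtain i S where v: "v = (i,S)" by (cases v)
  have vin: "v \<in> gverts m e q" using assms by (simp add: act_def)
  have dg: "card (outn (gedges m e q) v) = deg m e q (fst v)"
    using card_outn_gedges[of i S m e q] vin assms(2) v by simp
  have h1: "kreq m e q gsource / \<alpha> \<le> real (card (outn T gsource))"
    using sol unfolding approx_sol_def by blast
  have h4: "\<forall>v\<in>gverts m e q. fst v \<noteq> 3*e \<and> v \<noteq> gsource \<and> card (inn T v) = 1 \<longrightarrow>
        kreq m e q v / \<alpha> \<le> real (card (outn T v))"
    using sol unfolding approx_sol_def by blast
  have "kreq m e q v / \<alpha> \<le> real (card (outn T v))"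
  proof (cases "v = gsource")
    case True then show ?thesis using h1 by simp
  next
    case False
    hence "card (inn T v) = 1" using assms unfolding act_def by blast
    moreover have "fst v \<noteq> 3*e" using assms by simp
    ultimately show ?thesis using h4 vin False by blast
  qed
  thus ?thesis using dg unfolding kreq_def xval_def by simp
qed

lemma desc_act: "act v \<Longrightarrow> u \<in> desc T j v \<Longrightarrow> act u \<and> fst u = fst v + j"
proof (induction j arbitrary: u)
  case 0 then show ?case by simp
next
  case (Suc j)
  then obtain a where a: "a \<in> desc T j v" "u \<in> outn T a" by auto
  from Suc.IH[OF Suc.prems(1) a(1)] have "fst a = fst v + j" by simp
  thus ?case using ch_act[OF a(2)] edge_T(3)[OF a(2)] by simp
qed

lemma desc_sub: assumes "act v" shows "desc T j v \<subseteq> gverts m e q"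
proof
  fix u assume "u \<in> desc T j v"
  from desc_act[OF assms this] have "act u" by simp
  thus "u \<in> gverts m e q" unfolding act_def by blast
qed

lemma finite_desc: "act v \<Longrightarrow> finite (desc T j v)"
  using desc_sub finite_gverts finite_subset by blast

lemma desc_disj: "u \<noteq> u' \<Longrightarrow> desc T j u \<inter> desc T j u' = {}"
proof (induction j)
  case 0 then show ?case by simp
next
  case (Suc j)
  show ?case
  proof (rule ccontr)
    assume "desc T (Suc j) u \<inter> desc T (Suc j) u' \<noteq> {}"
    then obtain x a a' where "a \<in> desc T j u" "x \<in> outn T a" "a' \<in> desc T j u'" "x \<in> outn T a'" by auto
    moreover from this have "a = a'" using ch_disj by blast
    ultimately show False using Suc by blast
  qed
qed

lemma desc_sup: "act v \<Longrightarrow> fst v + j \<le> 2*e \<Longrightarrow> u \<in> desc T j v \<Longrightarrow> snd v \<subseteq> snd u"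
proof (induction j arbitrary: u)
  case 0 then show ?case by simp
next
  case (Suc j)
  from Suc.prems(3) obtain a where a: "a \<in> desc T j v" "u \<in> outn T a" by auto
  have "fst a = fst v + j" using desc_act[OF Suc.prems(1) a(1)] by simp
  hence "fst u \<le> 2*e" using edge_T(3)[OF a(2)] Suc.prems(2) by simp
  hence "snd a \<subseteq> snd u" using edge_T(4)[OF a(2)] by blast
  moreover have j2: "fst v + j \<le> 2*e" using Suc.prems(2) by simp
  moreover have "snd v \<subseteq> snd a" using Suc.IH[OF Suc.prems(1) j2 a(1)] .
  ultimately show ?case by blast
qed

lemma desc_subl: "act v \<Longrightarrow> 2*e \<le> fst v \<Longrightarrow> u \<in> desc T j v \<Longrightarrow> snd u \<subseteq> snd v"
proof (induction j arbitrary: u)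
  case 0 then show ?case by simp
next
  case (Suc j)
  from Suc.prems(3) obtain a where a: "a \<in> desc T j v" "u \<in> outn T a" by auto
  have "fst a = fst v + j" using desc_act[OF Suc.prems(1) a(1)] by simp
  hence "\<not> fst u \<le> 2*e" using edge_T(3)[OF a(2)] Suc.prems(2) by simp
  hence "snd u \<subseteq> snd a" using edge_T(5)[OF a(2)] by blast
  moreover have "snd a \<subseteq> snd v" using Suc.IH[OF Suc.prems(1) Suc.prems(2) a(1)] .
  ultimately show ?case by blast
qed

lemma xval_nonneg: "0 \<le> xval m e q \<alpha> i"
  using apos by (simp add: xval_def gamma_layer_def gam1_def gam2_def gam3_def)

lemma desc_card: "act v \<Longrightarrow> fst v + j \<le> 3*e \<Longrightarrow> (\<Prod>i<j. xval m e q \<alpha> (fst v + i)) \<le> real (card (desc T j v))"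
proof (induction j)
  case 0 then show ?case by simp
next
  case (Suc j)
  have fin: "finite (desc T j v)" using finite_desc[OF Suc.prems(1)] .
  have "card (desc T (Suc j) v) = (\<Sum>u\<in>desc T j v. card (outn T u))"
  proof -
    have "\<And>u. u \<in> desc T j v \<Longrightarrow> finite (outn T u)"
    proof -
      fix u assume "u \<in> desc T j v"
      have "outn T u \<subseteq> gverts m e q" using edge_T(2) by blast
      thus "finite (outn T u)" using finite_gverts finite_subset by blast
    qed
    moreover have "\<forall>a\<in>desc T j v. \<forall>b\<in>desc T j v. a \<noteq> b \<longrightarrow> outn T a \<inter> outn T b = {}"
      using ch_disj by blast
    ultimately show ?thesis using fin by (simp add: card_UN_disjoint)
  qed
  hence "real (card (desc T (Suc j) v)) = (\<Sum>u\<in>desc T j v. real (card (outn T u)))" by simp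
  also have "\<dots> \<ge> (\<Sum>u\<in>desc T j v. xval m e q \<alpha> (fst v + j))"
  proof (rule sum_mono)
    fix u assume "u \<in> desc T j v"
    with desc_act[OF Suc.prems(1)] have "act u" "fst u = fst v + j" by auto
    moreover have "fst u < 3*e" using \<open>fst u = fst v + j\<close> Suc.prems(2) by simp
    ultimately show "xval m e q \<alpha> (fst v + j) \<le> real (card (outn T u))" using act_out[of u] by simp
  qed
  finally have "real (card (desc T j v)) * xval m e q \<alpha> (fst v + j) \<le> real (card (desc T (Suc j) v))"
    by (simp add: mult.commute)
  moreover have "(\<Prod>i<j. xval m e q \<alpha> (fst v + i)) * xval m e q \<alpha> (fst v + j) \<le> real (card (desc T j v)) * xval m e q \<alpha> (fst v + j)"
    using Suc xval_nonneg by (intro mult_right_mono) auto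
  ultimately show ?case by simp
qed

end

lemma gam_pow:
  assumes X: "X > 0" and e: "1 \<le> e"
  shows "(fact q / X powr (1 / real e)) ^ e = (fact q ^ e / X :: real)"
proof -
  have "(X powr (1 / real e)) ^ e = X powr (real e * (1 / real e))"
    using X by (intro powr_power) simp
  also have "real e * (1 / real e) = 1" using e by simp
  finally have "(X powr (1 / real e)) ^ e = X" using X by simp
  thus ?thesis by (simp add: power_divide)
qed

locale msol2 = msol +
  assumes mk: "2*(e*q) \<le> m" and q1: "1 \<le> q"
begin

lemma gam_pos: "0 < gamma_layer m e q i"
proof -
  have a: "0 < real ((m - e*q) choose (e*q))" using mk by simp
  have b: "0 < real ((2*(e*q)) choose (e*q))" by simp
  show ?thesis unfolding gamma_layer_def gam1_def gam2_def gam3_def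
    using a b by auto
qed

lemma deg_pos: assumes "i < 3*e" shows "0 < deg m e q i"
proof (cases "i < 2*e")
  case True
  hence "Suc i \<le> 2*e" by simp
  hence "Suc i * q \<le> 2*e*q" by (rule mult_right_mono) simp
  hence "q \<le> m - i*q" using mk by simp
  thus ?thesis using True by (simp add: deg_def)
next
  case False
  have "1 \<le> 4*e - i" using assms by simp
  hence "1*q \<le> (4*e - i)*q" by (rule mult_right_mono) simp
  thus ?thesis using False by (simp add: deg_def)
qed

lemma xval_pos: "i < 3*e \<Longrightarrow> 0 < xval m e q \<alpha> i"
  using gam_pos deg_pos apos by (simp add: xval_def)

lemma prod_xval_const:
  "(\<Prod>i<e. xval m e q \<alpha> (a + i)) = (g / \<alpha>) ^ e * (\<Prod>i<e. real (deg m e q (a + i)))"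
  if "\<And>i. i < e \<Longrightarrow> gamma_layer m e q (a + i) = g"
proof -
  have "(\<Prod>i<e. xval m e q \<alpha> (a + i)) = (\<Prod>i<e. (g / \<alpha>) * real (deg m e q (a + i)))"
    using that by (intro prod.cong) (auto simp: xval_def)
  also have "\<dots> = (g / \<alpha>) ^ e * (\<Prod>i<e. real (deg m e q (a + i)))"
    unfolding prod.distrib by simp
  finally show ?thesis .
qed

lemma prod2: "(\<Prod>i<e. xval m e q \<alpha> (e + i)) =
   real ((m - e*q) choose (e*q)) / real ((2*(e*q)) choose (e*q)) / \<alpha> ^ e"
proof -
  let ?k = "e*q"
  have g: "gam2 e q ^ e = fact q ^ e / (fact ?k * real ((2*?k) choose ?k))"
    unfolding gam2_def using e1 by (intro gam_pow) auto
  have "(\<Prod>i<e. xval m e q \<alpha> (e + i)) = (gam2 e q / \<alpha>) ^ e * (\<Prod>i<e. real (deg m e q (e + i)))"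
    by (rule prod_xval_const) (simp add: gamma_layer_def)
  also have "(\<Prod>i<e. real (deg m e q (e + i))) = (\<Prod>i<e. real ((m - ?k - i*q) choose q))"
    by (intro prod.cong) (auto simp: deg_def algebra_simps)
  also have "\<dots> = fact (m - ?k) / (fact (m - ?k - ?k) * fact q ^ e)"
    using prod_binom_telescope[of e q "m - ?k"] mk by simp
  finally have eq1: "(\<Prod>i<e. xval m e q \<alpha> (e + i)) = (gam2 e q ^ e / \<alpha> ^ e) * (fact (m - ?k) / (fact (m - ?k - ?k) * fact q ^ e))"
    by (simp add: power_divide)
  have eq2: "real ((m - ?k) choose ?k) = fact (m - ?k) / (fact ?k * fact (m - ?k - ?k))"
    using mk by (intro binomial_fact) simp
  have nz: "real ((2*?k) choose ?k) \<noteq> 0" by simp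
  show ?thesis unfolding eq1 eq2 g using apos nz by (simp add: field_simps)
qed

lemma prod3: "(\<Prod>i<e. xval m e q \<alpha> (2*e + i)) = real ((2*(e*q)) choose (e*q)) / \<alpha> ^ e"
proof -
  let ?k = "e*q"
  have g: "gam3 e q ^ e = fact q ^ e / fact ?k"
    unfolding gam3_def using e1 by (intro gam_pow) auto
  have "(\<Prod>i<e. xval m e q \<alpha> (2*e + i)) = (gam3 e q / \<alpha>) ^ e * (\<Prod>i<e. real (deg m e q (2*e + i)))"
    by (rule prod_xval_const) (simp add: gamma_layer_def)
  also have "(\<Prod>i<e. real (deg m e q (2*e + i))) = (\<Prod>i<e. real ((2*?k - i*q) choose q))"
  proof (intro prod.cong refl)
    fix i assume "i \<in> {..<e}"
    have "(4*e - (2*e + i)) * q = 2*?k - i*q" by (simp add: diff_mult_distrib algebra_simps)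
    thus "real (deg m e q (2*e + i)) = real ((2*?k - i*q) choose q)" by (simp add: deg_def)
  qed
  also have "\<dots> = fact (2*?k) / (fact (2*?k - ?k) * fact q ^ e)"
    using prod_binom_telescope[of e q "2*?k"] by simp
  finally have eq1: "(\<Prod>i<e. xval m e q \<alpha> (2*e + i)) = (gam3 e q ^ e / \<alpha> ^ e) * (fact (2*?k) / (fact (2*?k - ?k) * fact q ^ e))"
    by (simp add: power_divide)
  have eq2: "real ((2*?k) choose ?k) = fact (2*?k) / (fact ?k * fact (2*?k - ?k))"
    by (intro binomial_fact) simp
  show ?thesis unfolding eq1 eq2 g using apos by (simp add: field_simps)
qed

lemma card_layer: assumes "act v" shows "card (snd v) = lsize e q (fst v)" "snd v \<subseteq> {..<m}"
proof -
  obtain i S where v: "v = (i,S)" by (cases v)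
  have "(i,S) \<in> gverts m e q" using assms v by (simp add: act_def)
  thus "card (snd v) = lsize e q (fst v)" "snd v \<subseteq> {..<m}" using v by (auto simp: gverts_iff)
qed

lemma count_bad:
  assumes fin: "finite B" and AB: "A \<subseteq> B" and cA: "card A = k" and cB: "card B = 2*k" and sk: "s \<le> k"
  shows "card {S. S \<subseteq> B \<and> card S = k \<and> card (S \<inter> A) \<le> s} \<le> (k choose s) * ((k + s) choose s)"
proof -
  let ?Us = "{U. U \<subseteq> B - A \<and> card U = k - s}"
  let ?F = "\<lambda>U. {S. S \<subseteq> B \<and> U \<subseteq> S \<and> card S = card U + s}"
  have sub: "{S. S \<subseteq> B \<and> card S = k \<and> card (S \<inter> A) \<le> s} \<subseteq> (\<Union>U\<in>?Us. ?F U)"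
  proof
    fix S assume "S \<in> {S. S \<subseteq> B \<and> card S = k \<and> card (S \<inter> A) \<le> s}"
    hence S: "S \<subseteq> B" "card S = k" "card (S \<inter> A) \<le> s" by auto
    have fS: "finite S" using S(1) fin finite_subset by blast
    have "card (S - A) = card S - card (S \<inter> A)"
      using fS by (simp add: card_Diff_subset_Int)
    hence "k - s \<le> card (S - A)" using S by simp
    then obtain U where U: "U \<subseteq> S - A" "card U = k - s"
      using obtain_subset_with_card_n by metis
    have "U \<in> ?Us" using U S(1) by auto
    moreover have "S \<in> ?F U" using U S sk by auto
    ultimately show "S \<in> (\<Union>U\<in>?Us. ?F U)" by blast
  qed
  have finUs: "finite ?Us" using fin by simp
  have "card {S. S \<subseteq> B \<and> card S = k \<and> card (S \<inter> A) \<le> s} \<le> card (\<Union>U\<in>?Us. ?F U)"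
  proof (rule card_mono[OF _ sub])
    have "(\<Union>U\<in>?Us. ?F U) \<subseteq> Pow B" by blast
    thus "finite (\<Union>U\<in>?Us. ?F U)" using fin finite_subset by blast
  qed
  also have "\<dots> \<le> (\<Sum>U\<in>?Us. card (?F U))" by (rule card_UN_le[OF finUs])
  also have "\<dots> = (\<Sum>U\<in>?Us. (k + s) choose s)"
  proof (rule sum.cong[OF refl])
    fix U assume "U \<in> ?Us"
    hence U: "U \<subseteq> B" "card U = k - s" by auto
    have "card (?F U) = (card B - card U) choose s" by (rule card_supersets[OF fin U(1)])
    also have "card B - card U = k + s" using U cB sk by simp
    finally show "card (?F U) = (k + s) choose s" .
  qed
  also have "\<dots> = card ?Us * ((k + s) choose s)" by simp
  also have "card ?Us = k choose (k - s)"
  proof -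
    have "card ?Us = card (B - A) choose (k - s)" using fin by (intro n_subsets) simp
    also have "card (B - A) = k" using fin AB cA cB by (simp add: card_Diff_subset finite_subset)
    finally show ?thesis .
  qed
  also have "k choose (k - s) = k choose s" using sk by (rule binomial_symmetric[symmetric])
  finally show ?thesis .
qed

lemma count_good:
  assumes "A \<subseteq> {..<m}" "card A = k" "s < k"
  shows "card {S. S \<subseteq> {..<m} \<and> card S = k \<and> s < card (S \<inter> A)} \<le> (k choose Suc s) * ((m - Suc s) choose (k - Suc s))"
proof -
  let ?Us = "{U. U \<subseteq> A \<and> card U = Suc s}"
  let ?F = "\<lambda>U. {S. S \<subseteq> {..<m} \<and> U \<subseteq> S \<and> card S = card U + (k - Suc s)}"
  have fin: "finite A" using assms(1) finite_subset by blast
  have sub: "{S. S \<subseteq> {..<m} \<and> card S = k \<and> s < card (S \<inter> A)} \<subseteq> (\<Union>U\<in>?Us. ?F U)"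
  proof
    fix S assume "S \<in> {S. S \<subseteq> {..<m} \<and> card S = k \<and> s < card (S \<inter> A)}"
    hence S: "S \<subseteq> {..<m}" "card S = k" "Suc s \<le> card (S \<inter> A)" by auto
    then obtain U where U: "U \<subseteq> S \<inter> A" "card U = Suc s"
      using obtain_subset_with_card_n by metis
    have "U \<in> ?Us" using U by auto
    moreover have "S \<in> ?F U" using U S assms(3) by auto
    ultimately show "S \<in> (\<Union>U\<in>?Us. ?F U)" by blast
  qed
  have finUs: "finite ?Us" using fin by simp
  have "card {S. S \<subseteq> {..<m} \<and> card S = k \<and> s < card (S \<inter> A)} \<le> card (\<Union>U\<in>?Us. ?F U)"
  proof (rule card_mono[OF _ sub])
    have "(\<Union>U\<in>?Us. ?F U) \<subseteq> Pow {..<m}" by blast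
    thus "finite (\<Union>U\<in>?Us. ?F U)" using finite_subset by blast
  qed
  also have "\<dots> \<le> (\<Sum>U\<in>?Us. card (?F U))" by (rule card_UN_le[OF finUs])
  also have "\<dots> = (\<Sum>U\<in>?Us. (m - Suc s) choose (k - Suc s))"
  proof (rule sum.cong[OF refl])
    fix U assume "U \<in> ?Us"
    hence U: "U \<subseteq> {..<m}" "card U = Suc s" using assms(1) by auto
    show "card (?F U) = (m - Suc s) choose (k - Suc s)"
      using card_supersets[of "{..<m}" U "k - Suc s"] U by simp
  qed
  also have "\<dots> = card ?Us * ((m - Suc s) choose (k - Suc s))" by simp
  also have "card ?Us = k choose Suc s" using fin assms(2) by (subst n_subsets) auto
  finally show ?thesis .
qed

lemma dichotomy:
  assumes sk: "s < e*q"
  shows "real ((2*(e*q)) choose (e*q)) \<le> 2 * real ((e*q choose s) * ((e*q + s) choose s)) * \<alpha> ^ e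
       \<or> real ((m - e*q) choose (e*q)) \<le> 2 * real ((e*q choose Suc s) * ((m - Suc s) choose (e*q - Suc s))) * \<alpha> ^ (2*e)"
proof -
  define k where "k = e*q"
  define C2 where "C2 = real ((2*k) choose k)"
  define \<beta> where "\<beta> = (k choose s) * ((k + s) choose s)"
  define \<Gamma> where "\<Gamma> = (k choose Suc s) * ((m - Suc s) choose (k - Suc s))"
  have C2pos: "0 < C2" unfolding C2_def by simp
  have ae: "0 < \<alpha> ^ e" using apos by simp
  have "0 < (\<Prod>i<e. xval m e q \<alpha> (fst gsource + i))"
    using xval_pos by (intro prod_pos) (auto simp: gsource_def)
  also have "\<dots> \<le> real (card (desc T e gsource))"
    using desc_card[OF act_src, of e] by (simp add: gsource_def)
  finally have "desc T e gsource \<noteq> {}" by (metis card.empty of_nat_0 less_irrefl)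
  then obtain A where A: "A \<in> desc T e gsource" by blast
  have actA: "act A" and fA: "fst A = e" using desc_act[OF act_src A] by (auto simp: gsource_def)
  have cA: "card (snd A) = k" using card_layer(1)[OF actA] fA e1 by (simp add: lsize_def k_def)
  have Am: "snd A \<subseteq> {..<m}" using card_layer(2)[OF actA] .
  define W where "W = desc T e A"
  have finW: "finite W" unfolding W_def using finite_desc[OF actA] .
  have cardW: "real ((m - k) choose k) / C2 / \<alpha> ^ e \<le> real (card W)"
    using desc_card[OF actA, of e] prod2 fA unfolding W_def C2_def k_def by simp
  have Wp: "act w \<and> fst w = 2*e \<and> snd A \<subseteq> snd w \<and> card (snd w) = 2*k \<and> snd w \<subseteq> {..<m}" if "w \<in> W" for w
  proof -
    have aw: "act w" "fst w = 2*e" using desc_act[OF actA that[unfolded W_def]] fA by auto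
    have "snd A \<subseteq> snd w" using desc_sup[OF actA _ that[unfolded W_def]] fA by simp
    moreover have "card (snd w) = 2*k" using card_layer(1)[OF aw(1)] aw(2) by (simp add: lsize_def k_def)
    ultimately show ?thesis using aw card_layer(2)[OF aw(1)] by simp
  qed
  define D where "D w = desc T e w" for w
  have Dp: "act u \<and> fst u = 3*e \<and> snd u \<subseteq> snd w \<and> card (snd u) = k" if "w \<in> W" "u \<in> D w" for w u
  proof -
    have aw: "act w" "fst w = 2*e" using Wp[OF that(1)] by auto
    have au: "act u" "fst u = 3*e" using desc_act[OF aw(1) that(2)[unfolded D_def]] aw(2) by auto
    have "snd u \<subseteq> snd w" using desc_subl[OF aw(1) _ that(2)[unfolded D_def]] aw(2) by simp
    moreover have "card (snd u) = k" using card_layer(1)[OF au(1)] au(2) by (simp add: lsize_def k_def)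
    ultimately show ?thesis using au by simp
  qed
  have finD: "finite (D w)" if "w \<in> W" for w
    using finite_desc Wp[OF that] unfolding D_def by blast
  have cardD: "C2 / \<alpha> ^ e \<le> real (card (D w))" if "w \<in> W" for w
  proof -
    have aw: "act w" "fst w = 2*e" using Wp[OF that] by auto
    show ?thesis using desc_card[OF aw(1), of e] prod3 aw(2) unfolding D_def C2_def k_def by simp
  qed
  define bad where "bad w = {u \<in> D w. card (snd u \<inter> snd A) \<le> s}" for w
  define good where "good w = {u \<in> D w. s < card (snd u \<inter> snd A)}" for w
  have bad_le: "card (bad w) \<le> \<beta>" if "w \<in> W" for w
  proof -
    have wp: "snd A \<subseteq> snd w" "card (snd w) = 2*k" "snd w \<subseteq> {..<m}" using Wp[OF that] by auto
    have fw: "finite (snd w)" using wp(3) finite_lessThan finite_subset by blast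
    have bsub: "bad w \<subseteq> Pair (3*e) ` {S. S \<subseteq> snd w \<and> card S = k \<and> card (S \<inter> snd A) \<le> s}"
    proof
      fix u assume u: "u \<in> bad w"
      hence uD: "u \<in> D w" and "card (snd u \<inter> snd A) \<le> s" unfolding bad_def by auto
      from Dp[OF that uD] have "fst u = 3*e" "snd u \<subseteq> snd w" "card (snd u) = k" by auto
      thus "u \<in> Pair (3*e) ` {S. S \<subseteq> snd w \<and> card S = k \<and> card (S \<inter> snd A) \<le> s}"
        using \<open>card (snd u \<inter> snd A) \<le> s\<close> by (intro image_eqI[of _ _ "snd u"]) (auto simp: prod_eq_iff)
    qed
    have finS: "finite {S. S \<subseteq> snd w \<and> card S = k \<and> card (S \<inter> snd A) \<le> s}"
    proof -
      have "finite (Pow (snd w))" using fw by simp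
      moreover have "{S. S \<subseteq> snd w \<and> card S = k \<and> card (S \<inter> snd A) \<le> s} \<subseteq> Pow (snd w)" by blast
      ultimately show ?thesis using finite_subset by blast
    qed
    have "card (bad w) \<le> card (Pair (3*e) ` {S. S \<subseteq> snd w \<and> card S = k \<and> card (S \<inter> snd A) \<le> s})"
      by (rule card_mono[OF finite_imageI[OF finS] bsub])
    also have "\<dots> \<le> card {S. S \<subseteq> snd w \<and> card S = k \<and> card (S \<inter> snd A) \<le> s}"
      by (rule card_image_le[OF finS])
    also have "\<dots> \<le> \<beta>" unfolding \<beta>_def
      by (rule count_bad[OF fw wp(1) cA wp(2)]) (use sk in \<open>simp add: k_def\<close>)
    finally show ?thesis .
  qed
  have good_ge: "real (card (D w)) - real \<beta> \<le> real (card (good w))" if "w \<in> W" for w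
  proof -
    have e1: "D w = bad w \<union> good w" unfolding bad_def good_def by auto
    have e2: "bad w \<inter> good w = {}" unfolding bad_def good_def by auto
    have fb: "finite (bad w)" using finD[OF that] unfolding bad_def by simp
    have fg: "finite (good w)" using finD[OF that] unfolding good_def by simp
    have "card (D w) = card (bad w) + card (good w)"
      unfolding e1 using card_Un_disjoint[OF fb fg e2] .
    thus ?thesis using bad_le[OF that] by simp
  qed
  define G where "G = (\<Union>w\<in>W. good w)"
  have cardG: "card G = (\<Sum>w\<in>W. card (good w))"
    unfolding G_def
  proof (rule card_UN_disjoint[OF finW])
    show "\<forall>i\<in>W. finite (good i)" using finD by (auto simp: good_def)
    show "\<forall>i\<in>W. \<forall>j\<in>W. i \<noteq> j \<longrightarrow> good i \<inter> good j = {}"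
      using desc_disj unfolding good_def D_def by blast
  qed
  have G_le: "card G \<le> \<Gamma>"
  proof -
    have gsub: "G \<subseteq> Pair (3*e) ` {S. S \<subseteq> {..<m} \<and> card S = k \<and> s < card (S \<inter> snd A)}"
    proof
      fix u assume "u \<in> G"
      then obtain w where w: "w \<in> W" "u \<in> D w" "s < card (snd u \<inter> snd A)"
        unfolding G_def good_def by blast
      from Dp[OF w(1,2)] have "fst u = 3*e" "snd u \<subseteq> snd w" "card (snd u) = k" by auto
      moreover from Wp[OF w(1)] have "snd w \<subseteq> {..<m}" by simp
      ultimately have "fst u = 3*e" "snd u \<subseteq> {..<m}" "card (snd u) = k" by auto
      thus "u \<in> Pair (3*e) ` {S. S \<subseteq> {..<m} \<and> card S = k \<and> s < card (S \<inter> snd A)}"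
        using w(3) by (intro image_eqI[of _ _ "snd u"]) (auto simp: prod_eq_iff)
    qed
    have finS: "finite {S. S \<subseteq> {..<m} \<and> card S = k \<and> s < card (S \<inter> snd A)}"
    proof -
      have "finite (Pow {..<m::nat})" by simp
      moreover have "{S. S \<subseteq> {..<m} \<and> card S = k \<and> s < card (S \<inter> snd A)} \<subseteq> Pow {..<m}" by blast
      ultimately show ?thesis using finite_subset by blast
    qed
    have "card G \<le> card (Pair (3*e) ` {S. S \<subseteq> {..<m} \<and> card S = k \<and> s < card (S \<inter> snd A)})"
      by (rule card_mono[OF finite_imageI[OF finS] gsub])
    also have "\<dots> \<le> card {S. S \<subseteq> {..<m} \<and> card S = k \<and> s < card (S \<inter> snd A)}"
      by (rule card_image_le[OF finS])
    also have "\<dots> \<le> \<Gamma>" unfolding \<Gamma>_def by (rule count_good[OF Am cA]) (use sk in \<open>simp add: k_def\<close>)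
    finally show ?thesis .
  qed
  show ?thesis
  proof (cases "C2 \<le> 2 * real \<beta> * \<alpha> ^ e")
    case True thus ?thesis unfolding C2_def \<beta>_def k_def by simp
  next
    case False
    define Y where "Y = C2 / \<alpha> ^ e"
    have Yb: "2 * real \<beta> < Y" using False ae unfolding Y_def by (simp add: field_simps)
    have "real (card W) * (Y - real \<beta>) = (\<Sum>w\<in>W. Y - real \<beta>)" by simp
    also have "\<dots> \<le> (\<Sum>w\<in>W. real (card (good w)))"
    proof (rule sum_mono)
      fix w assume w: "w \<in> W"
      have "Y \<le> real (card (D w))" using cardD[OF w] unfolding Y_def .
      thus "Y - real \<beta> \<le> real (card (good w))" using good_ge[OF w] by linarith
    qed
    also have "\<dots> = real (card G)" using cardG by simp
    also have "\<dots> \<le> real \<Gamma>" using G_le by simp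
    finally have h1: "real (card W) * (Y - real \<beta>) \<le> real \<Gamma>" .
    have "real ((m - k) choose k) / C2 / \<alpha> ^ e * (Y / 2) \<le> real (card W) * (Y - real \<beta>)"
    proof (rule mult_mono[OF cardW])
      show "Y / 2 \<le> Y - real \<beta>" using Yb by linarith
      show "0 \<le> real (card W)" by simp
      show "0 \<le> Y / 2" using Yb by linarith
    qed
    also have "real ((m - k) choose k) / C2 / \<alpha> ^ e * (Y / 2) = real ((m - k) choose k) / (2 * \<alpha> ^ (2*e))"
    proof -
      have "\<alpha> ^ (2*e) = \<alpha> ^ e * \<alpha> ^ e" by (simp add: mult_2 power_add)
      thus ?thesis unfolding Y_def using C2pos ae by (simp add: field_simps)
    qed
    finally have "real ((m - k) choose k) / (2 * \<alpha> ^ (2*e)) \<le> real \<Gamma>" using h1 by linarith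
    moreover have "0 < 2 * \<alpha> ^ (2*e)" using apos by simp
    ultimately have "real ((m - k) choose k) \<le> real \<Gamma> * (2 * \<alpha> ^ (2*e))"
      by (simp add: divide_le_eq)
    hence "real ((m - k) choose k) \<le> 2 * real \<Gamma> * \<alpha> ^ (2*e)" by (simp add: mult_ac)
    thus ?thesis unfolding \<Gamma>_def k_def by simp
  qed
qed

end

lemma binom_le_64:
  assumes "0 < s" "n \<le> 18*s"
  shows "real (n choose s) \<le> 64^s"
proof -
  have "real (n choose s) \<le> (exp 1 * real n / real s) ^ s" using binom_le_exp_bound assms(1) .
  also have "\<dots> \<le> 64^s"
  proof (rule power_mono)
    have "real n \<le> 18 * real s" using assms(2) by linarith
    hence "real n / real s \<le> 18" using assms(1) by (simp add: divide_le_eq)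
    moreover have "exp 1 \<le> (3::real)" by (rule exp_le)
    ultimately have "exp 1 * (real n / real s) \<le> 3 * 18"
      by (intro mult_mono) auto
    thus "exp 1 * real n / real s \<le> 64" by simp
    show "0 \<le> exp 1 * real n / real s" by simp
  qed
  finally show ?thesis .
qed

lemma est1:
  assumes k: "240 \<le> k" and s: "s = k div 16"
  shows "2 * real ((k choose s) * ((k + s) choose s)) * 2^k \<le> real ((2*k) choose k) * (2 * real k)"
proof -
  have s15: "15 \<le> s" using k s by simp
  have ks: "k \<le> 16*s + 15" "16*s \<le> k" using s by auto
  have b1: "real (k choose s) \<le> 64^s" using s15 ks by (intro binom_le_64) auto
  have b2: "real ((k+s) choose s) \<le> 64^s" using s15 ks by (intro binom_le_64) auto
  have "2 * real ((k choose s) * ((k + s) choose s)) * 2^k \<le> 2 * (64^s * 64^s) * 2^k"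
    using b1 b2 by (simp add: mult_mono)
  also have "(2::real) * (64^s * 64^s) * 2^k = 2 ^ (1 + 12*s + k)"
  proof -
    have "(64::real)^s = 2^(6*s)" by (simp add: power_mult)
    thus ?thesis by (simp add: power_add[symmetric])
  qed
  also have "(2::real) ^ (1 + 12*s + k) \<le> 2 ^ (2*k)"
    using ks s15 by (intro power_increasing) auto
  also have "(2::real) ^ (2*k) = 4^k" by (simp add: power_mult)
  also have "4^k \<le> real ((2*k) choose k) * (2 * real k)"
    using central_binomial_lower_bound[of k] k by (simp add: field_simps)
  finally show ?thesis .
qed

lemma est2:
  assumes k: "16 \<le> k" and s: "s = k div 16" and m: "2^113 * real k \<le> real m"
  shows "2 * real ((k choose Suc s) * ((m - Suc s) choose (k - Suc s))) * 2^k \<le> real ((m - k) choose k)"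
proof -
  define r where "r = k - Suc s"
  have ks: "k \<le> 16*s + 15" "16*s \<le> k" using s by auto
  have r1: "1 \<le> r" "k \<le> 2*r" "r + Suc s = k" "r \<le> k" using ks k by (auto simp: r_def)
  have kpos: "0 < real k" using k by simp
  define L where "L = real m / (2 * real k)"
  have L112: "2^112 \<le> L" using m kpos unfolding L_def by (simp add: field_simps)
  have Lpos: "0 < L" using L112 by (smt (verit) zero_less_power)
  have mk: "2 * k \<le> m"
  proof -
    have "2 * real k \<le> 2^113 * real k" using kpos by simp
    thus ?thesis using m by linarith
  qed
  have h1: "real (k choose Suc s) \<le> 2^k"
    using binomial_le_pow2[of k "Suc s"] by (metis of_nat_le_iff of_nat_numeral of_nat_power)
  have h2: "real ((m - Suc s) choose r) \<le> (16 * L)^r"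
  proof -
    have "real ((m - Suc s) choose r) \<le> (exp 1 * real (m - Suc s) / real r) ^ r"
      using binom_le_exp_bound r1(1) by simp
    also have "\<dots> \<le> (16 * L)^r"
    proof (rule power_mono)
      show "0 \<le> exp 1 * real (m - Suc s) / real r" by simp
      have a: "real (m - Suc s) \<le> real m" by simp
      have b: "real k \<le> 2 * real r" using r1(2) by linarith
      have "exp 1 * real (m - Suc s) / real r \<le> 3 * real m / real r"
        using exp_le a r1(1) by (intro divide_right_mono mult_mono) auto
      also have "\<dots> \<le> 3 * real m / (real k / 2)"
        using b kpos by (intro divide_left_mono) auto
      also have "\<dots> = 12 * L" unfolding L_def using kpos by (simp add: field_simps)
      also have "\<dots> \<le> 16 * L" using Lpos by simp
      finally show "exp 1 * real (m - Suc s) / real r \<le> 16 * L" .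
    qed
    finally show ?thesis .
  qed
  have h3: "L ^ k \<le> real ((m - k) choose k)"
  proof -
    have "L \<le> real (m - k) / real k"
    proof -
      have "real (m - k) = real m - real k" using mk by simp
      moreover have "real m / (2 * real k) \<le> (real m - real k) / real k"
        using kpos mk by (simp add: field_simps)
      ultimately show ?thesis unfolding L_def by simp
    qed
    hence "L ^ k \<le> (real (m - k) / real k) ^ k" by (rule power_mono) (use Lpos in simp)
    also have "\<dots> \<le> real ((m - k) choose k)" using mk by (intro binomial_ge_n_over_k_pow_k) simp
    finally show ?thesis .
  qed
  have h4: "2 * 4^k * 16^r \<le> L ^ Suc s"
  proof -
    have "(2::real) * 4^k * 16^r = 2 ^ (1 + 2*k + 4*r)" by (simp add: power_add power_mult)
    also have "\<dots> \<le> 2 ^ (112 * Suc s)" using ks r1 k by (intro power_increasing) auto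
    also have "(2::real) ^ (112 * Suc s) = (2^112) ^ Suc s" by (rule power_mult)
    also have "\<dots> \<le> L ^ Suc s" using L112 by (intro power_mono) auto
    finally show ?thesis .
  qed
  have "2 * real ((k choose Suc s) * ((m - Suc s) choose r)) * 2^k \<le> 2 * (2^k * (16 * L)^r) * 2^k"
    using h1 h2 by (simp add: mult_mono)
  also have "\<dots> = (2 * 4^k * 16^r) * L^r"
  proof -
    have "(4::real)^k = 2^k * 2^k" by (metis power_mult_distrib mult_2 numeral_Bit0 numeral_One mult_2_right one_add_one power2_eq_square power_mult_distrib)
    thus ?thesis by (simp add: power_mult_distrib algebra_simps)
  qed
  also have "\<dots> \<le> L ^ Suc s * L ^ r" using h4 Lpos by (intro mult_right_mono) auto
  also have "\<dots> = L ^ k"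
  proof -
    have "L ^ Suc s * L ^ r = L ^ (Suc s + r)" by (rule power_add[symmetric])
    also have "Suc s + r = k" using r1(3) by simp
    finally show ?thesis .
  qed
  also have "\<dots> \<le> real ((m - k) choose k)" by (rule h3)
  finally show ?thesis unfolding r_def .
qed

lemma ev_k: "\<forall>\<^sub>F k in sequentially. 2 powr (real k / 2) * (2 * real k) \<le> 2 ^ k"
proof -
  have "\<forall>\<^sub>F x in at_top. 2 powr (x / 2) * (2 * x) \<le> (2::real) powr x" by real_asymp
  hence "\<forall>\<^sub>F k in sequentially. 2 powr (real k / 2) * (2 * real k) \<le> (2::real) powr (real k)"
    by (rule eventually_compose_filterlim[OF _ filterlim_real_sequentially])
  thus ?thesis by (simp add: powr_realpow)
qed

lemma two_k_le: "2 * k \<le> (2::nat)^k"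
proof (induction k)
  case 0 then show ?case by simp
next
  case (Suc k)
  show ?case
  proof (cases "k = 0")
    case True then show ?thesis by simp
  next
    case False
    hence "(2::nat)^1 \<le> 2^k" by (intro power_increasing) auto
    thus ?thesis using Suc.IH by simp
  qed
qed

context msol2 begin

lemma alpha_bound:
  assumes k240: "240 \<le> e*q" and m: "2^113 * real (e*q) \<le> real m"
  shows "2^(e*q) / (2 * real (e*q)) \<le> \<alpha> ^ (2*e)"
proof -
  define k where "k = e*q"
  define s where "s = k div 16"
  have sk: "s < e*q" using k240 unfolding s_def k_def by simp
  have "0 < k" unfolding k_def using k240 by linarith
  hence kpos: "0 < real k" by simp
  have ae: "0 < \<alpha> ^ e" using apos by simp
  have a2: "\<alpha> ^ (2*e) = \<alpha> ^ e * \<alpha> ^ e" by (simp add: mult_2 power_add)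
  define X where "X = 2^k / (2 * real k)"
  have X1: "1 \<le> X"
  proof -
    have "2 * k \<le> 2 ^ k" by (rule two_k_le)
    hence "real (2 * k) \<le> real (2 ^ k)" by (simp only: of_nat_le_iff)
    hence "2 * real k \<le> 2 ^ k" by simp
    thus ?thesis unfolding X_def using kpos by (simp add: field_simps)
  qed
  have Xk: "X \<le> 2^k"
  proof -
    have "1 \<le> 2 * real k" using \<open>0 < k\<close> by simp
    hence "2^k / (2 * real k) \<le> 2^k / 1" by (intro divide_left_mono) auto
    thus ?thesis unfolding X_def by simp
  qed
  from dichotomy[OF sk] show ?thesis
  proof
    assume h: "real ((2*(e*q)) choose (e*q)) \<le> 2 * real ((e*q choose s) * ((e*q + s) choose s)) * \<alpha> ^ e"
    define \<beta> where "\<beta> = real ((k choose s) * ((k + s) choose s))"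
    have bpos: "0 < \<beta>" unfolding \<beta>_def using sk by (simp add: k_def)
    have "2 * \<beta> * 2^k \<le> real ((2*k) choose k) * (2 * real k)"
      unfolding \<beta>_def using est1[of k s] k240 by (simp add: k_def s_def)
    also have "\<dots> \<le> 2 * \<beta> * \<alpha> ^ e * (2 * real k)"
      using h kpos unfolding \<beta>_def k_def by (intro mult_right_mono) auto
    finally have "(2 * \<beta>) * 2^k \<le> (2 * \<beta>) * (\<alpha> ^ e * (2 * real k))" by (simp add: mult_ac)
    hence "2^k \<le> \<alpha> ^ e * (2 * real k)" using bpos by (subst (asm) mult_le_cancel_left_pos) auto
    hence XA: "X \<le> \<alpha> ^ e" unfolding X_def using kpos by (simp add: divide_le_eq mult.commute)
    have "X \<le> X * X" using X1 by simp
    also have "\<dots> \<le> \<alpha> ^ e * \<alpha> ^ e" using XA X1 by (intro mult_mono) auto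
    finally show ?thesis using a2 unfolding X_def k_def by simp
  next
    assume h: "real ((m - e*q) choose (e*q)) \<le> 2 * real ((e*q choose Suc s) * ((m - Suc s) choose (e*q - Suc s))) * \<alpha> ^ (2*e)"
    define \<Gamma> where "\<Gamma> = real ((k choose Suc s) * ((m - Suc s) choose (k - Suc s)))"
    have mk: "2*k \<le> m" using mk unfolding k_def .
    have Cpos: "0 < real ((m - k) choose k)" using mk by simp
    have e2: "2 * \<Gamma> * 2^k \<le> real ((m - k) choose k)"
      unfolding \<Gamma>_def using est2[of k s m] k240 m by (simp add: k_def s_def)
    have h': "real ((m - k) choose k) \<le> 2 * \<Gamma> * \<alpha> ^ (2*e)" using h unfolding \<Gamma>_def k_def .
    have gpos: "0 < \<Gamma>"
    proof (rule ccontr)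
      assume "\<not> 0 < \<Gamma>"
      moreover have "0 \<le> \<Gamma>" unfolding \<Gamma>_def by simp
      ultimately have "\<Gamma> = 0" by simp
      thus False using h' Cpos by simp
    qed
    have "2 * \<Gamma> * 2^k \<le> 2 * \<Gamma> * \<alpha> ^ (2*e)" using e2 h' by linarith
    hence "2^k \<le> \<alpha> ^ (2*e)" using gpos by simp
    thus ?thesis using Xk unfolding X_def k_def by linarith
  qed
qed

end

lemma ln2_gt_half: "1/2 < ln (2::real)"
proof -
  have "exp (1/2::real) * exp (1/2) = exp 1" by (simp add: exp_add[symmetric])
  also have "\<dots> \<le> 3" by (rule exp_le)
  finally have "exp (1/2::real) * exp (1/2) < 2 * 2" by simp
  hence "exp (1/2::real) < 2"
  proof -
    assume a: "exp (1/2::real) * exp (1/2) < 2 * 2"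
    show ?thesis
    proof (rule ccontr)
      assume "\<not> exp (1/2::real) < 2"
      hence "2 \<le> exp (1/2::real)" by simp
      hence "2 * 2 \<le> exp (1/2::real) * exp (1/2)" by (intro mult_mono) auto
      thus False using a by simp
    qed
  qed
  hence "ln (exp (1/2::real)) < ln 2" by (subst ln_less_cancel_iff) auto
  thus ?thesis by simp
qed

lemma M_large:
  fixes M E :: nat and B :: real
  assumes B5: "5 \<le> B" and h: "B \<le> real M / (real E * ln (real M))" and E1: "1 \<le> E"
  shows "3 \<le> M \<and> B \<le> real M"
proof -
  have M3: "3 \<le> M"
  proof (rule ccontr)
    assume "\<not> 3 \<le> M"
    hence "M = 0 \<or> M = 1 \<or> M = 2" by auto
    moreover have "M \<noteq> 0"
    proof
      assume "M = 0"
      hence "real M / (real E * ln (real M)) = 0" by simp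
      thus False using h B5 by linarith
    qed
    moreover have "M \<noteq> 1"
    proof
      assume "M = 1"
      hence "real M / (real E * ln (real M)) = 0" by simp
      thus False using h B5 by linarith
    qed
    moreover have "M \<noteq> 2"
    proof
      assume M2: "M = 2"
      have l: "1/2 < ln (2::real)" by (rule ln2_gt_half)
      have "real E * ln 2 \<ge> 1 * (1/2)" using E1 l by (intro mult_mono) auto
      hence "2 / (real E * ln 2) \<le> 2 / (1/2)"
        by (intro divide_left_mono) auto
      moreover have "real M / (real E * ln (real M)) = 2 / (real E * ln 2)" using M2 by simp
      ultimately have "real M / (real E * ln (real M)) \<le> 2 / (1/2)" by simp
      thus False using h B5 by simp
    qed
    ultimately show False by blast
  qed
  have "1 \<le> ln (real M)"
  proof -
    have "exp 1 \<le> real M" using exp_le M3 by linarith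
    hence "ln (exp 1) \<le> ln (real M)" using M3 by (subst ln_le_cancel_iff) auto
    thus ?thesis by simp
  qed
  hence "1 * 1 \<le> real E * ln (real M)" using E1 by (intro mult_mono) auto
  hence "1 \<le> real E * ln (real M)" by simp
  hence "real M / (real E * ln (real M)) \<le> real M / 1" by (intro divide_left_mono) auto
  thus ?thesis using M3 h by simp
qed

lemma three_m: "3 * m + 1 \<le> (4::nat)^m"
proof (induction m)
  case 0 then show ?case by simp
next
  case (Suc m)
  have "1 \<le> (4::nat)^m" by simp
  thus ?case using Suc.IH by simp
qed

theorem lemma9:
  shows "\<exists>\<xi>>0. \<forall>\<rho>::real. 0 < \<rho> \<and> \<rho> < \<xi> \<longrightarrow>
    (\<exists>c>0. \<forall>M E Q :: nat \<Rightarrow> nat.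
       (\<forall>j. 1 \<le> E j) \<and>
       (\<forall>j. real (Q j) = \<rho> * real (M j) / real (E j)) \<and>
       filterlim (\<lambda>j. real (M j) / (real (E j) * ln (real (M j)))) at_top sequentially
       \<longrightarrow> (\<forall>\<^sub>F j in sequentially. \<forall>(\<alpha>::real) T. 0 < \<alpha> \<and> approx_sol (M j) (E j) (Q j) \<alpha> T \<longrightarrow>
              \<alpha> \<ge> real (gnum (M j) (E j) (Q j)) powr (c / real (3 * E j))))"
proof (rule exI[of _ "1 / 2^113"], intro conjI allI impI)
  show "(0::real) < 1 / 2^113" by simp
  fix \<rho> :: real assume \<rho>: "0 < \<rho> \<and> \<rho> < 1 / 2^113"
  have main: "\<forall>M E Q :: nat \<Rightarrow> nat.
       (\<forall>j. 1 \<le> E j) \<and>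
       (\<forall>j. real (Q j) = \<rho> * real (M j) / real (E j)) \<and>
       filterlim (\<lambda>j. real (M j) / (real (E j) * ln (real (M j)))) at_top sequentially
       \<longrightarrow> (\<forall>\<^sub>F j in sequentially. \<forall>(\<alpha>::real) T. 0 < \<alpha> \<and> approx_sol (M j) (E j) (Q j) \<alpha> T \<longrightarrow>
              \<alpha> \<ge> real (gnum (M j) (E j) (Q j)) powr ((\<rho>/4) / real (3 * E j)))"
  proof (intro allI impI)
    fix M E Q :: "nat \<Rightarrow> nat"
    assume H: "(\<forall>j. 1 \<le> E j) \<and> (\<forall>j. real (Q j) = \<rho> * real (M j) / real (E j)) \<and>
       filterlim (\<lambda>j. real (M j) / (real (E j) * ln (real (M j)))) at_top sequentially"
    obtain K0 where K0: "\<And>k. K0 \<le> k \<Longrightarrow> 2 powr (real k / 2) * (2 * real k) \<le> 2 ^ k"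
      using ev_k unfolding eventually_sequentially by blast
    define K where "K = max K0 240"
    define B where "B = max 5 (real K / \<rho>)"
    have evB: "\<forall>\<^sub>F j in sequentially. B \<le> real (M j) / (real (E j) * ln (real (M j)))"
      using H unfolding filterlim_at_top by blast
    show "\<forall>\<^sub>F j in sequentially. \<forall>(\<alpha>::real) T. 0 < \<alpha> \<and> approx_sol (M j) (E j) (Q j) \<alpha> T \<longrightarrow>
              \<alpha> \<ge> real (gnum (M j) (E j) (Q j)) powr ((\<rho>/4) / real (3 * E j))"
    proof (rule eventually_mono[OF evB], intro allI impI)
      fix j \<alpha> T
      assume hB: "B \<le> real (M j) / (real (E j) * ln (real (M j)))"
        and hA: "0 < \<alpha> \<and> approx_sol (M j) (E j) (Q j) \<alpha> T"
      define m where "m = M j"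
      define e where "e = E j"
      define q where "q = Q j"
      define k where "k = e * q"
      have e1: "1 \<le> e" using H unfolding e_def by blast
      have epos: "0 < real e" using e1 by simp
      have B5: "5 \<le> B" unfolding B_def by simp
      have "1 \<le> E j" using H by blast
      from M_large[OF B5 hB this] have Ml: "3 \<le> m \<and> B \<le> real m" unfolding m_def .
      have kr: "real k = \<rho> * real m"
      proof -
        have "real q = \<rho> * real m / real e" using H unfolding q_def m_def e_def by blast
        thus ?thesis unfolding k_def using epos by (simp add: field_simps)
      qed
      have kK: "K \<le> k"
      proof -
        have "real K / \<rho> \<le> real m" using Ml unfolding B_def by linarith
        hence "real K \<le> \<rho> * real m" using \<rho> by (simp add: divide_le_eq mult.commute)
        thus ?thesis using kr by simp
      qed
      have k240: "240 \<le> k" using kK unfolding K_def by simp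
      have mbig: "2^113 * real k \<le> real m"
      proof -
        have "\<rho> * real m \<le> (1 / 2^113) * real m" using \<rho> by (intro mult_right_mono) auto
        thus ?thesis using kr by (simp add: field_simps)
      qed
      have mk2: "2 * k \<le> m"
      proof -
        have "2 * real k \<le> 2^113 * real k" by simp
        thus ?thesis using mbig by linarith
      qed
      have q1: "1 \<le> q" using k240 unfolding k_def by (cases q) auto
      have apos: "0 < \<alpha>" and sol: "approx_sol m e q \<alpha> T" using hA unfolding m_def e_def q_def by auto
      have mk3: "2*(e*q) \<le> m" using mk2 unfolding k_def .
      interpret msol2 m e q \<alpha> T
        by unfold_locales (rule e1, rule apos, rule sol, rule mk3, rule q1)
      have ab: "2^k / (2 * real k) \<le> \<alpha> ^ (2*e)"
        using alpha_bound k240 mbig unfolding k_def by blast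
      have kpos: "0 < real k" using k240 by simp
      have "2 powr (real k / 2) \<le> 2^k / (2 * real k)"
        using K0[of k] kK kpos unfolding K_def by (simp add: field_simps)
      also note ab
      finally have a2: "2 powr (real k / 2) \<le> \<alpha> ^ (2*e)" .
      have aeq: "\<alpha> = (\<alpha> ^ (2*e)) powr (1 / real (2*e))"
      proof -
        have p: "\<alpha> powr (real (2*e)) = \<alpha> ^ (2*e)" using apos by (rule powr_realpow)
        have "(\<alpha> ^ (2*e)) powr (1 / real (2*e)) = (\<alpha> powr (real (2*e))) powr (1 / real (2*e))"
          by (simp only: p)
        also have "\<dots> = \<alpha> powr (real (2*e) * (1 / real (2*e)))" by (rule powr_powr)
        also have "real (2*e) * (1 / real (2*e)) = 1" using epos by simp
        finally show ?thesis using apos by simp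
      qed
      have "2 powr (real k / (4 * real e)) = (2 powr (real k / 2)) powr (1 / real (2*e))"
      proof -
        have "(2 powr (real k / 2)) powr (1 / real (2*e)) = 2 powr (real k / 2 * (1 / real (2*e)))"
          by (rule powr_powr)
        also have "real k / 2 * (1 / real (2*e)) = real k / (4 * real e)" using epos by simp
        finally show ?thesis by simp
      qed
      also have "\<dots> \<le> (\<alpha> ^ (2*e)) powr (1 / real (2*e))"
        using a2 by (intro powr_mono2) auto
      also have "\<dots> = \<alpha>" using aeq by simp
      finally have alow: "2 powr (real k / (4 * real e)) \<le> \<alpha>" .
      have em: "e \<le> m"
      proof -
        have "e \<le> e * q" using q1 by simp
        thus ?thesis using mk2 unfolding k_def by linarith
      qed
      have nle: "real (gnum m e q) \<le> 2 powr (3 * real m)"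
      proof -
        have g1: "gnum m e q \<le> (3*e+1) * 2^m" unfolding gnum_def by (rule card_gverts_le)
        have g2: "3*e+1 \<le> 4^m" using three_m[of m] em by linarith
        have g3: "(3*e+1) * 2^m \<le> 4^m * 2^m" using g2 by (rule mult_right_mono) simp
        have g4: "(4::nat)^m * 2^m = 8^m" by (simp add: power_mult_distrib[symmetric])
        have "gnum m e q \<le> 8^m" using g1 g3 g4 by linarith
        hence "real (gnum m e q) \<le> real (8^m)" by (simp only: of_nat_le_iff)
        hence "real (gnum m e q) \<le> 8^m" by simp
        also have "(8::real)^m = 2 powr (3 * real m)"
        proof -
          have "(8::real)^m = (2^3)^m" by simp
          also have "\<dots> = 2^(3*m)" by (simp add: power_mult)
          also have "\<dots> = 2 powr (real (3*m))" by (rule powr_realpow[symmetric]) simp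
          finally show ?thesis by simp
        qed
        finally show ?thesis .
      qed
      have "real (gnum m e q) powr ((\<rho>/4) / real (3 * e)) \<le> (2 powr (3 * real m)) powr ((\<rho>/4) / real (3 * e))"
        by (rule powr_mono2) (use nle \<rho> in auto)
      also have "\<dots> = 2 powr (3 * real m * ((\<rho>/4) / real (3 * e)))" by (rule powr_powr)
      also have "3 * real m * ((\<rho>/4) / real (3 * e)) = real k / (4 * real e)"
        using kr epos by (simp add: field_simps)
      also note alow
      finally show "real (gnum (M j) (E j) (Q j)) powr ((\<rho>/4) / real (3 * E j)) \<le> \<alpha>"
        unfolding m_def e_def q_def .
    qed
  qed
  have c0: "0 < \<rho>/4" using \<rho> by simp
  show "\<exists>c>0. \<forall>M E Q :: nat \<Rightarrow> nat.
       (\<forall>j. 1 \<le> E j) \<and>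
       (\<forall>j. real (Q j) = \<rho> * real (M j) / real (E j)) \<and>
       filterlim (\<lambda>j. real (M j) / (real (E j) * ln (real (M j)))) at_top sequentially
       \<longrightarrow> (\<forall>\<^sub>F j in sequentially. \<forall>(\<alpha>::real) T. 0 < \<alpha> \<and> approx_sol (M j) (E j) (Q j) \<alpha> T \<longrightarrow>
              \<alpha> \<ge> real (gnum (M j) (E j) (Q j)) powr (c / real (3 * E j)))"
    by (rule exI[of _ "\<rho>/4"], rule conjI[OF c0 main])
qed

end
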